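(* Let $G$ be a connected graph on $n$ vertices with distance squared matrix $\Delta$. Let $v$ be a vertex of degree $2$ whose removal disconnects $G$, and let $u,w$ be the two neighbors of $v$. Define $\mathbf x\in\mathbb R^n$ by $x_u=x_w=1$, $x_v=-2$, and $x_i=0$ for all other vertices $i$. Then $\Delta\mathbf x=2\cdot\mathbf 1$, where $\mathbf 1$ is the all-ones vector.
   Context: For a connected graph $G$ with vertices $1,\dots,n$, the distance squared matrix $\Delta$ is the $n\times n$ matrix with $(i,j)$ entry $d_{ij}^2$, where $d_{ij}$ is the graph distance between $i$ and $j$ (with $d_{ii}=0$). *)

theory Defs
  imports "HOL-Analysis.Analysis"
begin

text \<open>A finite simple graph on the vertex type 'n (vertices = UNIV),
given by an adjacency relation E.\<close>

definition simple_graph :: "('n \<Rightarrow> 'n \<Rightarrow> bool) \<Rightarrow> bool" where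
  "simple_graph E \<longleftrightarrow> (\<forall>a b. E a b \<longrightarrow> E b a) \<and> (\<forall>a. \<not> E a a)"

definition graph_connected :: "('n \<Rightarrow> 'n \<Rightarrow> bool) \<Rightarrow> bool" where
  "graph_connected E \<longleftrightarrow> (\<forall>a b. E\<^sup>*\<^sup>* a b)"

definition gdist :: "('n \<Rightarrow> 'n \<Rightarrow> bool) \<Rightarrow> 'n \<Rightarrow> 'n \<Rightarrow> nat" where
  "gdist E a b = (LEAST k. (E ^^ k) a b)"

definition degree :: "('n \<Rightarrow> 'n \<Rightarrow> bool) \<Rightarrow> 'n \<Rightarrow> nat" where
  "degree E v = card {u. E v u}"

definition is_cut_vertex :: "('n \<Rightarrow> 'n \<Rightarrow> bool) \<Rightarrow> 'n \<Rightarrow> bool" where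
  "is_cut_vertex E v \<longleftrightarrow>
     (\<exists>a b. a \<noteq> v \<and> b \<noteq> v \<and> \<not> (\<lambda>x y. E x y \<and> x \<noteq> v \<and> y \<noteq> v)\<^sup>*\<^sup>* a b)"

definition dist_sq_matrix :: "('n::finite \<Rightarrow> 'n \<Rightarrow> bool) \<Rightarrow> real ^ 'n ^ 'n" where
  "dist_sq_matrix E = (\<chi> i j. (real (gdist E i j))\<^sup>2)"

end

theory Submission
  imports Defs
begin

lemma walkL:
  assumes "(E ^^ k) a b" "a \<noteq> v"
  shows "((\<lambda>x y. E x y \<and> x \<noteq> v \<and> y \<noteq> v)\<^sup>*\<^sup>* a b \<and> b \<noteq> v) \<or>
         (\<exists>c m. m < k \<and> (\<lambda>x y. E x y \<and> x \<noteq> v \<and> y \<noteq> v)\<^sup>*\<^sup>* a c \<and> c \<noteq> v \<and> E c v \<and> (E ^^ m) a c)"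
  using assms(1)
proof (induction k arbitrary: b)
  case 0
  then show ?case using assms(2) by auto
next
  case (Suc k)
  from Suc.prems obtain y where y: "(E ^^ k) a y" "E y b" by (auto elim: relpowp_Suc_E)
  from Suc.IH[OF y(1)] show ?case
  proof
    assume h: "(\<lambda>x y. E x y \<and> x \<noteq> v \<and> y \<noteq> v)\<^sup>*\<^sup>* a y \<and> y \<noteq> v"
    show ?case
    proof (cases "b = v")
      case True
      then show ?thesis using h y by blast
    next
      case False
      have "(\<lambda>x y. E x y \<and> x \<noteq> v \<and> y \<noteq> v)\<^sup>*\<^sup>* a b"
        by (rule rtranclp.rtrancl_into_rtrancl[OF conjunct1[OF h]]) (use y(2) False h[THEN conjunct2] in blast)
      then show ?thesis using False by blast
    qed
  next
    assume "\<exists>c m. m < k \<and> (\<lambda>x y. E x y \<and> x \<noteq> v \<and> y \<noteq> v)\<^sup>*\<^sup>* a c \<and> c \<noteq> v \<and> E c v \<and> (E ^^ m) a c"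
    then show ?case using less_SucI by blast
  qed
qed

lemma walkN:
  assumes "(E ^^ k) a b" "a \<noteq> v"
  shows "((\<lambda>x y. E x y \<and> x \<noteq> v \<and> y \<noteq> v)\<^sup>*\<^sup>* a b \<and> b \<noteq> v) \<or>
         (\<exists>m\<le>k. (E ^^ m) a v \<and> (b \<noteq> v \<longrightarrow> m < k))"
  using assms(1)
proof (induction k arbitrary: b)
  case 0
  then show ?case using assms(2) by auto
next
  case (Suc k)
  from Suc.prems obtain y where y: "(E ^^ k) a y" "E y b" by (auto elim: relpowp_Suc_E)
  from Suc.IH[OF y(1)] show ?case
  proof
    assume h: "(\<lambda>x y. E x y \<and> x \<noteq> v \<and> y \<noteq> v)\<^sup>*\<^sup>* a y \<and> y \<noteq> v"
    show ?case
    proof (cases "b = v")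
      case True
      then show ?thesis using h y Suc.prems by blast
    next
      case False
      have "(\<lambda>x y. E x y \<and> x \<noteq> v \<and> y \<noteq> v)\<^sup>*\<^sup>* a b"
        by (rule rtranclp.rtrancl_into_rtrancl[OF conjunct1[OF h]]) (use y(2) False h[THEN conjunct2] in blast)
      then show ?thesis using False by blast
    qed
  next
    assume "\<exists>m\<le>k. (E ^^ m) a v \<and> (y \<noteq> v \<longrightarrow> m < k)"
    then show ?case using le_SucI less_Suc_eq_le by blast
  qed
qed

lemma rt_sym:
  assumes "\<And>a b. R a b \<Longrightarrow> R b a" "R\<^sup>*\<^sup>* a b"
  shows "R\<^sup>*\<^sup>* b a"
  using assms(2)
  by (induction rule: rtranclp_induct)
     (auto intro: converse_rtranclp_into_rtranclp assms(1))

lemma rt_notv: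
  assumes "(\<lambda>x y. E x y \<and> x \<noteq> v \<and> y \<noteq> v)\<^sup>*\<^sup>* a b" "a \<noteq> v"
  shows "b \<noteq> v"
  using assms by (induction rule: rtranclp_induct) auto

lemma gdist_le: "(E ^^ k) a b \<Longrightarrow> gdist E a b \<le> k"
  unfolding gdist_def by (rule Least_le)

lemma gdist_walk: "(E ^^ k) a b \<Longrightarrow> (E ^^ gdist E a b) a b"
  unfolding gdist_def by (rule LeastI)

lemma side:
  fixes E :: "'n::finite \<Rightarrow> 'n \<Rightarrow> bool"
  assumes sg: "simple_graph E"
    and nb: "\<And>c. E c v \<Longrightarrow> c = u \<or> c = w"
    and uv: "E v u" "E v w" "u \<noteq> v" "w \<noteq> v"
    and nuw: "\<not> (\<lambda>x y. E x y \<and> x \<noteq> v \<and> y \<noteq> v)\<^sup>*\<^sup>* u w"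
    and conn: "graph_connected E"
    and iu: "(\<lambda>x y. E x y \<and> x \<noteq> v \<and> y \<noteq> v)\<^sup>*\<^sup>* u i"
  shows "gdist E i v = gdist E i u + 1 \<and> gdist E i w = gdist E i u + 2"
proof -
  let ?E' = "\<lambda>x y. E x y \<and> x \<noteq> v \<and> y \<noteq> v"
  have symE: "\<And>a b. E a b \<Longrightarrow> E b a" using sg unfolding simple_graph_def by blast
  have symE': "\<And>a b. ?E' a b \<Longrightarrow> ?E' b a" using symE by blast
  have iv: "i \<noteq> v" using rt_notv[OF iu uv(3)] .
  have ex: "\<And>a b. \<exists>k. (E ^^ k) a b" using conn unfolding graph_connected_def
    using rtranclp_imp_relpowp by metis
  have nwi: "\<not> ?E'\<^sup>*\<^sup>* i w" using iu nuw by (meson rtranclp_trans)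
  obtain k where k: "(E ^^ k) i u" using ex by blast
  have wu: "(E ^^ gdist E i u) i u" using gdist_walk[OF k] .
  have "(E ^^ Suc (gdist E i u)) i v" using wu symE[OF uv(1)] by (rule relpowp_Suc_I)
  hence le1: "gdist E i v \<le> gdist E i u + 1" using gdist_le by fastforce
  obtain k2 where k2: "(E ^^ k2) i v" using ex by blast
  have wv: "(E ^^ gdist E i v) i v" using gdist_walk[OF k2] .
  from walkL[OF wv iv] obtain c m where cm: "m < gdist E i v" "?E'\<^sup>*\<^sup>* i c" "E c v" "(E ^^ m) i c"
    by blast
  have "c = u" using nb[OF cm(3)] cm(2) nwi by blast
  hence "gdist E i u \<le> m" using cm(4) gdist_le by metis
  hence eq1: "gdist E i v = gdist E i u + 1" using le1 cm(1) by linarith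
  have "(E ^^ Suc (gdist E i v)) i w" using wv uv(2) by (rule relpowp_Suc_I)
  hence le2: "gdist E i w \<le> gdist E i v + 1" using gdist_le by fastforce
  obtain k3 where k3: "(E ^^ k3) i w" using ex by blast
  have ww: "(E ^^ gdist E i w) i w" using gdist_walk[OF k3] .
  from walkN[OF ww iv] nwi obtain m2 where m2: "m2 < gdist E i w" "(E ^^ m2) i v"
    using uv(4) by blast
  have "gdist E i v \<le> m2" using m2(2) gdist_le by metis
  then show ?thesis using eq1 le2 m2(1) by linarith
qed

theorem lemma3p3:
  fixes E :: "'n::finite \<Rightarrow> 'n \<Rightarrow> bool" and u v w :: 'n and x :: "real ^ 'n"
  assumes "simple_graph E"
    and "graph_connected E"
    and "degree E v = 2"
    and "is_cut_vertex E v"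
    and "u \<noteq> w" and "E v u" and "E v w"
    and "x = (\<chi> i. if i = u \<or> i = w then 1 else if i = v then -2 else 0)"
  shows "dist_sq_matrix E *v x = (\<chi> i. 2)"
proof -
  let ?E' = "\<lambda>x y. E x y \<and> x \<noteq> v \<and> y \<noteq> v"
  have symE: "\<And>a b. E a b \<Longrightarrow> E b a" using assms(1) unfolding simple_graph_def by blast
  have irr: "\<And>a. \<not> E a a" using assms(1) unfolding simple_graph_def by blast
  have symE': "\<And>a b. ?E' a b \<Longrightarrow> ?E' b a" using symE by blast
  have uv: "u \<noteq> v" "w \<noteq> v" using irr assms(6,7) by metis+
  have "{u, w} \<subseteq> {y. E v y}" using assms(6,7) by auto
  moreover have "card {u, w} = card {y. E v y}" using assms(3,5) unfolding degree_def by simp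
  ultimately have N0: "{u, w} = {y. E v y}" by (intro card_subset_eq finite)
  hence N: "{y. E v y} = {u, w}" by (rule sym)
  have nb: "\<And>c. E c v \<Longrightarrow> c = u \<or> c = w" using N symE by blast
  have ex: "\<And>a b. \<exists>k. (E ^^ k) a b" using assms(2) unfolding graph_connected_def
    using rtranclp_imp_relpowp by metis
  have cover: "\<And>i. i \<noteq> v \<Longrightarrow> ?E'\<^sup>*\<^sup>* u i \<or> ?E'\<^sup>*\<^sup>* w i"
  proof -
    fix i assume iv: "i \<noteq> v"
    obtain k where "(E ^^ k) i v" using ex by blast
    from walkL[OF this iv] obtain c where c: "?E'\<^sup>*\<^sup>* i c" "E c v" by blast
    have cuw: "c = u \<or> c = w" using nb[OF c(2)] .
    have "?E'\<^sup>*\<^sup>* c i" using rt_sym[of ?E', OF symE' c(1)] by simp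
    thus "?E'\<^sup>*\<^sup>* u i \<or> ?E'\<^sup>*\<^sup>* w i" using cuw by blast
  qed
  have nuw: "\<not> ?E'\<^sup>*\<^sup>* u w"
  proof
    assume uw: "?E'\<^sup>*\<^sup>* u w"
    have all: "?E'\<^sup>*\<^sup>* u i" if iv: "i \<noteq> v" for i
    proof -
      from cover[OF iv] show ?thesis
      proof
        assume "?E'\<^sup>*\<^sup>* w i"
        with uw show ?thesis by (rule rtranclp_trans)
      qed
    qed
    from assms(4) obtain a b where ab: "a \<noteq> v" "b \<noteq> v" "\<not> ?E'\<^sup>*\<^sup>* a b"
      unfolding is_cut_vertex_def by blast
    have au: "?E'\<^sup>*\<^sup>* a u" using rt_sym[of ?E', OF symE' all[OF ab(1)]] by simp
    have "?E'\<^sup>*\<^sup>* a b" using au all[OF ab(2)] by (rule rtranclp_trans)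
    then show False using ab(3) by simp
  qed
  have nwu: "\<not> ?E'\<^sup>*\<^sup>* w u"
  proof
    assume "?E'\<^sup>*\<^sup>* w u"
    hence "?E'\<^sup>*\<^sup>* u w" using rt_sym[of ?E', OF symE'] by simp
    thus False using nuw by simp
  qed
  have gd0: "\<And>a. gdist E a a = 0" using gdist_le[where E=E and k=0] by fastforce
  have gd1: "\<And>a b. E a b \<Longrightarrow> gdist E a b = 1"
  proof -
    fix a b assume e: "E a b"
    have e1: "(E ^^ Suc 0) a b" using e by (simp only: relpowp_Suc_0)
    have "gdist E a b \<le> 1" using gdist_le[OF e1] by simp
    moreover have "gdist E a b \<noteq> 0"
    proof
      assume "gdist E a b = 0"
      hence "(E ^^ 0) a b" using gdist_walk[OF e1] by simp
      thus False using e irr by simp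
    qed
    ultimately show "gdist E a b = 1" by linarith
  qed
  let ?D = "\<lambda>i j. (real (gdist E i j))\<^sup>2"
  have key: "\<And>i. ?D i u + ?D i w - 2 * ?D i v = 2"
  proof -
    fix i
    show "?D i u + ?D i w - 2 * ?D i v = 2"
    proof (cases "i = v")
      case True
      then show ?thesis using gd0 gd1[OF assms(6)] gd1[OF assms(7)] by simp
    next
      case False
      from cover[OF this] show ?thesis
      proof
        assume "?E'\<^sup>*\<^sup>* u i"
        from side[OF assms(1) nb assms(6,7) uv nuw assms(2) this] show ?thesis
          by (simp add: power2_eq_square algebra_simps)
      next
        assume wi: "?E'\<^sup>*\<^sup>* w i"
        have nb': "\<And>c. E c v \<Longrightarrow> c = w \<or> c = u" using nb by blast
        from side[OF assms(1) nb' assms(7,6) uv(2,1) nwu assms(2) wi] show ?thesis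
          by (simp add: power2_eq_square algebra_simps)
      qed
    qed
  qed
  show ?thesis
  proof (rule vec_eq_iff[THEN iffD2], rule allI)
    fix i
    have "(dist_sq_matrix E *v x) $ i = (\<Sum>j\<in>UNIV. ?D i j * x $ j)"
      unfolding dist_sq_matrix_def matrix_vector_mult_def by simp
    also have "\<dots> = (\<Sum>j\<in>UNIV. (if j = u then ?D i u else 0) + (if j = w then ?D i w else 0)
                      + (if j = v then -2 * ?D i v else 0))"
      using assms(5,8) uv by (intro sum.cong) auto
    also have "\<dots> = ?D i u + ?D i w - 2 * ?D i v"
      by (simp add: sum.distrib)
    also have "\<dots> = 2" using key .
    finally show "(dist_sq_matrix E *v x) $ i = (\<chi> i. 2) $ i" by simp
  qed
qed

end
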